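(* Let $X$ be a proper subset of $\{\mathrm{CONV},\mathrm{CA},\mathrm{REF},\mathrm{IAP}\}$ with $\mathrm{IAP}\in X$. Then there exists an infinite biosphere $(G,t)$ such that $\bigcap X$ (the set of $G$-subsets lying in every member of $X$, computed in $G$) is not upward generic.
   Context: An infinite biosphere is a directed graph $G$ together with a function $t$ assigning a real number $t(v)$ to each vertex, such that: (1) if $v$ is a parent of $w$ (edge from $v$ to $w$) then $t(v)<t(w)$; (2) for every $r\in\mathbb R$ at most finitely many vertices $v$ have $t(v)<r$; (3) every vertex has finitely many children; (4) $G$ is infinite. $v$ is an ancestor of $w$ (and $w$ a descendant of $v$) if there is a directed path $v=v_1,\dots,v_n=w$ with $n>1$. A $G$-subset is a set of vertices. $\mathrm{IAP}$: $G$-subsets $S$ such that no $v\in S$ has both infinitely many descendants in $S$ and infinitely many non-descendants in $S$. $\mathrm{CONV}$: $G$-subsets $S$ such that every $v\in G$ having an ancestor in $S$ and a descendant in $S$ lies in $S$. $\mathrm{CA}$: $G$-subsets $S$ for which there exists $v\in S$ such that every $w\in S$ with $w\neq v$ is a descendant of $v$. $\mathrm{REF}$: $G$-subsets $S$ such that every $v\in S$ with infinitely many descendants in $G$ has infinitely many descendants in $S$. For a nonempty linear order $(Y,<)$, an ascending chain of $G$-subsets indexed by $Y$ is a family $\{C_\alpha\}_{\alpha\in Y}$ with $C_\alpha\subseteq C_\beta$ whenever $\alpha<\beta$. A set $T$ of $G$-subsets is upward generic if for every ascending chain $\{C_\alpha\}_{\alpha\in Y}$ of nonempty $G$-subsets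 with each $C_\alpha\in T$, $\bigcup_\alpha C_\alpha\in T$. *)

theory Defs
  imports Complex_Main
begin

text \<open>An infinite biosphere with vertex set V (a set of naturals; every infinite
biosphere is countable by condition (2)), edge relation E (edge (v,w): v is a parent of w),
and time function t.\<close>
definition biosphere :: "nat set \<Rightarrow> (nat \<times> nat) set \<Rightarrow> (nat \<Rightarrow> real) \<Rightarrow> bool" where
  "biosphere V E t \<longleftrightarrow>
     E \<subseteq> V \<times> V \<and>
     (\<forall>(v, w) \<in> E. t v < t w) \<and>
     (\<forall>r::real. finite {v \<in> V. t v < r}) \<and>
     (\<forall>v \<in> V. finite {w. (v, w) \<in> E}) \<and>
     infinite V"

text \<open>w is a descendant of v iff (v,w) is in the transitive closure E^+.\<close>

datatype cls = CONV | CA | REF | IAP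

definition IAP_sets :: "nat set \<Rightarrow> (nat \<times> nat) set \<Rightarrow> nat set set" where
  "IAP_sets V E = {S. S \<subseteq> V \<and>
     (\<forall>v \<in> S. \<not> (infinite {w \<in> S. (v, w) \<in> E\<^sup>+} \<and> infinite {w \<in> S. (v, w) \<notin> E\<^sup>+}))}"

definition CONV_sets :: "nat set \<Rightarrow> (nat \<times> nat) set \<Rightarrow> nat set set" where
  "CONV_sets V E = {S. S \<subseteq> V \<and>
     (\<forall>v \<in> V. (\<exists>a \<in> S. (a, v) \<in> E\<^sup>+) \<and> (\<exists>d \<in> S. (v, d) \<in> E\<^sup>+) \<longrightarrow> v \<in> S)}"

definition CA_sets :: "nat set \<Rightarrow> (nat \<times> nat) set \<Rightarrow> nat set set" where
  "CA_sets V E = {S. S \<subseteq> V \<and> (\<exists>v \<in> S. \<forall>w \<in> S. w \<noteq> v \<longrightarrow> (v, w) \<in> E\<^sup>+)}"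

definition REF_sets :: "nat set \<Rightarrow> (nat \<times> nat) set \<Rightarrow> nat set set" where
  "REF_sets V E = {S. S \<subseteq> V \<and>
     (\<forall>v \<in> S. infinite {w \<in> V. (v, w) \<in> E\<^sup>+} \<longrightarrow> infinite {w \<in> S. (v, w) \<in> E\<^sup>+})}"

fun cls_sets :: "nat set \<Rightarrow> (nat \<times> nat) set \<Rightarrow> cls \<Rightarrow> nat set set" where
  "cls_sets V E CONV = CONV_sets V E"
| "cls_sets V E CA = CA_sets V E"
| "cls_sets V E REF = REF_sets V E"
| "cls_sets V E IAP = IAP_sets V E"

definition inter_cls :: "nat set \<Rightarrow> (nat \<times> nat) set \<Rightarrow> cls set \<Rightarrow> nat set set" where
  "inter_cls V E X = {S. S \<subseteq> V \<and> (\<forall>c \<in> X. S \<in> cls_sets V E c)}"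

text \<open>An ascending chain indexed by a nonempty linear order has
the same union as its image, a nonempty set of sets totally ordered by inclusion;
conversely such a set is a chain indexed by itself. So we quantify over such sets.\<close>
definition upward_generic :: "nat set set \<Rightarrow> bool" where
  "upward_generic T \<longleftrightarrow>
     (\<forall>\<C>. \<C> \<noteq> {} \<and> (\<forall>C \<in> \<C>. C \<noteq> {} \<and> C \<in> T) \<and>
          (\<forall>A \<in> \<C>. \<forall>B \<in> \<C>. A \<subseteq> B \<or> B \<subseteq> A)
          \<longrightarrow> \<Union>\<C> \<in> T)"

end

theory Submission
  imports Defs "HOL-Library.Infinite_Set"
begin

definition Eg :: "(nat \<times> nat) set" where
  "Eg = {(x,y). (x mod 3 = 0 \<and> (y = x+3 \<or> y = x+1)) \<or> (x = 0 \<and> y = 2) \<or> (x mod 3 = 2 \<and> y = x+3)}"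

lemma F1: "(x,y) \<in> Eg\<^sup>+ \<Longrightarrow> x < y"
  by (induction rule: trancl_induct) (auto simp: Eg_def)

lemma F2: "(x,y) \<in> Eg\<^sup>+ \<Longrightarrow> x mod 3 = 2 \<Longrightarrow> y mod 3 = 2"
  by (induction rule: trancl_induct) (auto simp: Eg_def)

lemma F3: "x mod 3 = 1 \<Longrightarrow> (x,y) \<notin> Eg\<^sup>+"
proof
  assume "x mod 3 = 1" "(x,y) \<in> Eg\<^sup>+"
  then show False by (auto elim: converse_tranclE simp: Eg_def)
qed

lemma F4: "x mod 3 \<noteq> 1 \<Longrightarrow> (x, x + 3*(k+1)) \<in> Eg\<^sup>+"
proof (induction k)
  case 0
  then have "(x, x+3) \<in> Eg" by (auto simp: Eg_def)
  then show ?case by auto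
next
  case (Suc k)
  have "(x + 3*(k+1)) mod 3 = 0 \<or> (x + 3*(k+1)) mod 3 = 2" using Suc.prems by presburger
  moreover have "x + 3*(Suc k+1) = (x + 3*(k+1)) + 3" by simp
  ultimately have "(x + 3*(k+1), x + 3*(Suc k+1)) \<in> Eg" unfolding Eg_def by blast
  then show ?case using Suc by (meson trancl_into_trancl)
qed

lemma F4': "x mod 3 = 2 \<Longrightarrow> y mod 3 = 2 \<Longrightarrow> x < y \<Longrightarrow> (x,y) \<in> Eg\<^sup>+"
proof -
  assume a: "x mod 3 = 2" "y mod 3 = 2" "x < y"
  define k where "k = (y - x) div 3 - 1"
  have "y = x + 3*(k+1)" using a unfolding k_def by presburger
  then show ?thesis using F4[of x k] a by auto
qed

lemma F5: "y > 0 \<Longrightarrow> (0, y) \<in> Eg\<^sup>+"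
proof -
  assume y: "y > 0"
  consider "y mod 3 = 0" | "y mod 3 = 1" | "y mod 3 = 2" by linarith
  then show ?thesis
  proof cases
    case 1
    define k where "k = y div 3 - 1"
    have "y = 0 + 3*(k+1)" using y 1 unfolding k_def by presburger
    then show ?thesis using F4[of 0 k] by auto
  next
    case 2
    show ?thesis
    proof (cases "y = 1")
      case True then show ?thesis by (auto simp: Eg_def)
    next
      case False
      define k where "k = y div 3 - 1"
      have k: "y - 1 = 0 + 3*(k+1)" using y 2 False unfolding k_def by presburger
      have "(0, y-1) \<in> Eg\<^sup>+" using F4[of 0 k] k by simp
      moreover have "(y-1, y) \<in> Eg" using k y by (auto simp: Eg_def)
      ultimately show ?thesis by (rule trancl_into_trancl)
    qed
  next
    case 3
    have e: "(0,2) \<in> Eg" by (auto simp: Eg_def)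
    show ?thesis
    proof (cases "y = 2")
      case False
      then have "2 < y" using 3 y by presburger
      then have "(2,y) \<in> Eg\<^sup>+" using F4'[of 2 y] 3 by simp
      with e show ?thesis by (rule trancl_into_trancl2)
    qed (use e in auto)
  qed
qed

lemma bios: "biosphere UNIV Eg real"
  unfolding biosphere_def
proof (intro conjI)
  show "\<forall>(v, w)\<in>Eg. real v < real w" by (auto simp: Eg_def)
  show "\<forall>r. finite {v \<in> UNIV. real v < r}"
  proof
    fix r :: real
    have "{v \<in> UNIV. real v < r} \<subseteq> {..nat \<lceil>r\<rceil>}" by (auto, linarith)
    then show "finite {v \<in> UNIV. real v < r}" by (rule finite_subset) auto
  qed
  show "\<forall>v\<in>UNIV. finite {w. (v, w) \<in> Eg}"
  proof
    fix v
    have "{w. (v, w) \<in> Eg} \<subseteq> {..v+3}" by (auto simp: Eg_def)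
    then show "finite {w. (v, w) \<in> Eg}" by (rule finite_subset) auto
  qed
qed auto

lemma infA: "infinite {w. w mod 3 = (2::nat) \<and> w > x}"
  unfolding infinite_nat_iff_unbounded_le
proof
  fix m
  show "\<exists>n\<ge>m. n \<in> {w. w mod 3 = 2 \<and> x < w}"
    by (rule exI[of _ "3*(m+x)+2"]) (simp, presburger)
qed

lemma infB: "infinite {w. w mod 3 = (1::nat)}"
  unfolding infinite_nat_iff_unbounded_le
proof
  fix m
  show "\<exists>n\<ge>m. n \<in> {w. w mod 3 = (1::nat)}"
    by (rule exI[of _ "3*m+1"]) auto
qed

lemma union_bad:
  assumes "{w. w mod 3 = 2} \<union> {w. w mod 3 = 1} \<subseteq> S"
  shows "S \<notin> IAP_sets UNIV Eg"
proof
  assume "S \<in> IAP_sets UNIV Eg"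
  moreover have "(2::nat) \<in> S" using assms by auto
  ultimately have h: "\<not> (infinite {w \<in> S. (2, w) \<in> Eg\<^sup>+} \<and> infinite {w \<in> S. (2, w) \<notin> Eg\<^sup>+})"
    unfolding IAP_sets_def by blast
  have "{w. w mod 3 = (2::nat) \<and> w > 2} \<subseteq> {w \<in> S. (2, w) \<in> Eg\<^sup>+}"
    using assms F4' by auto
  then have "infinite {w \<in> S. (2, w) \<in> Eg\<^sup>+}" using infA[of 2] finite_subset by blast
  moreover have "{w. w mod 3 = (1::nat)} \<subseteq> {w \<in> S. (2, w) \<notin> Eg\<^sup>+}"
    using assms F2 by fastforce
  then have "infinite {w \<in> S. (2, w) \<notin> Eg\<^sup>+}" using infB finite_subset by blast
  ultimately show False using h by blast
qed

lemma ng: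
  fixes C :: "nat \<Rightarrow> nat set"
  assumes "\<And>n. C n \<noteq> {}" "\<And>n k. k \<in> X \<Longrightarrow> C n \<in> cls_sets UNIV Eg k" "mono C"
    "\<Union>(range C) \<notin> IAP_sets UNIV Eg" "IAP \<in> X"
  shows "\<not> upward_generic (inter_cls UNIV Eg X)"
proof
  assume u: "upward_generic (inter_cls UNIV Eg X)"
  have ch: "\<forall>A\<in>range C. \<forall>B\<in>range C. A \<subseteq> B \<or> B \<subseteq> A"
  proof (intro ballI)
    fix A B assume "A \<in> range C" "B \<in> range C"
    then obtain i j where "A = C i" "B = C j" by blast
    then show "A \<subseteq> B \<or> B \<subseteq> A" using assms(3) nle_le[of i j] by (metis monoD)
  qed
  have "\<forall>D\<in>range C. D \<noteq> {} \<and> D \<in> inter_cls UNIV Eg X"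
    using assms(1,2) by (auto simp: inter_cls_def)
  then have "\<Union>(range C) \<in> inter_cls UNIV Eg X"
    using u ch unfolding upward_generic_def by blast
  then show False using assms(4,5) by (auto simp: inter_cls_def)
qed

lemma iapC:
  assumes "S \<subseteq> {0} \<union> {w. w mod 3 = 2} \<union> {w. w mod 3 = 1 \<and> w \<le> n}"
  shows "S \<in> IAP_sets UNIV Eg"
  unfolding IAP_sets_def
proof (intro CollectI conjI ballI)
  fix x assume x: "x \<in> S"
  show "\<not> (infinite {w \<in> S. (x, w) \<in> Eg\<^sup>+} \<and> infinite {w \<in> S. (x, w) \<notin> Eg\<^sup>+})"
  proof (cases "x mod 3 = 1")
    case True
    then have "{w \<in> S. (x, w) \<in> Eg\<^sup>+} = {}" using F3 by auto
    then show ?thesis by (metis finite.emptyI)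
  next
    case False
    then have x02: "x = 0 \<or> x mod 3 = 2" using x assms by auto
    have "{w \<in> S. (x, w) \<notin> Eg\<^sup>+} \<subseteq> {..max x n}"
    proof
      fix w assume w: "w \<in> {w \<in> S. (x, w) \<notin> Eg\<^sup>+}"
      show "w \<in> {..max x n}"
      proof (rule ccontr)
        assume "w \<notin> {..max x n}"
        then have wb: "w > x" "w > n" by auto
        then have "w mod 3 = 2" using w assms by auto
        then have "(x, w) \<in> Eg\<^sup>+" using x02 wb F5 F4' by auto
        then show False using w by auto
      qed
    qed
    then show ?thesis using finite_subset by blast
  qed
qed simp

lemma refC:
  assumes "S \<subseteq> {0} \<union> {w. w mod 3 = 2} \<union> {w. w mod 3 = 1 \<and> w \<le> n}"
    "{w. w mod 3 = 2} \<subseteq> S"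
  shows "S \<in> REF_sets UNIV Eg"
  unfolding REF_sets_def
proof (intro CollectI conjI ballI impI)
  fix x assume x: "x \<in> S" and inf: "infinite {w \<in> UNIV. (x, w) \<in> Eg\<^sup>+}"
  have "x mod 3 \<noteq> 1" using inf F3 by auto
  then have x02: "x = 0 \<or> x mod 3 = 2" using x assms by auto
  have "{w. w mod 3 = (2::nat) \<and> w > x} \<subseteq> {w \<in> S. (x, w) \<in> Eg\<^sup>+}"
    using assms(2) x02 F5 F4' by auto
  then show "infinite {w \<in> S. (x, w) \<in> Eg\<^sup>+}" using infA[of x] finite_subset by blast
qed simp

theorem mainTheorem7:
  fixes X :: "cls set"
  assumes "IAP \<in> X" and "X \<noteq> UNIV"
  shows "\<exists>V E t. biosphere V E t \<and> \<not> upward_generic (inter_cls V E X)"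
proof -
  obtain c where c: "c \<notin> X" using assms(2) by auto
  have "\<not> upward_generic (inter_cls UNIV Eg X)"
  proof (cases c)
    case REF
    define C where "C = (\<lambda>n::nat. {..n})"
    show ?thesis
    proof (rule ng[of C])
      show "mono C" unfolding C_def mono_def by auto
      show "C n \<noteq> {}" for n unfolding C_def by auto
      have "\<Union>(range C) = UNIV" unfolding C_def by auto
      then show "\<Union>(range C) \<notin> IAP_sets UNIV Eg" using union_bad by simp
      show "C n \<in> cls_sets UNIV Eg k" if "k \<in> X" for n k
      proof (cases k)
        case CONV
        have "v \<in> C n" if "d \<in> C n" "(v, d) \<in> Eg\<^sup>+" for v d
          using that F1[of v d] unfolding C_def by simp
        then show ?thesis unfolding CONV cls_sets.simps CONV_sets_def by blast
      next
        case CA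
        have "0 \<in> C n" unfolding C_def by simp
        moreover have "\<forall>w\<in>C n. w \<noteq> 0 \<longrightarrow> (0, w) \<in> Eg\<^sup>+" using F5 by blast
        ultimately show ?thesis unfolding CA cls_sets.simps CA_sets_def by blast
      next
        case REF
        then show ?thesis using that c \<open>c = REF\<close> by simp
      next
        case IAP
        have "finite (C n)" unfolding C_def by simp
        then have "finite {w \<in> C n. P w}" for P by (rule rev_finite_subset) blast
        then show ?thesis unfolding IAP cls_sets.simps IAP_sets_def
          by (intro CollectI conjI ballI) auto
      qed
    qed (use assms in auto)
  next
    case CONV
    define C where "C = (\<lambda>n::nat. {0} \<union> {w. w mod 3 = 2} \<union> {w. w mod 3 = 1 \<and> w \<le> n})"
    show ?thesis
    proof (rule ng[of C])
      show "mono C" unfolding C_def mono_def by auto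
      show "C n \<noteq> {}" for n unfolding C_def by auto
      have "{w. w mod 3 = 2} \<union> {w. w mod 3 = 1} \<subseteq> \<Union>(range C)" unfolding C_def by auto
      then show "\<Union>(range C) \<notin> IAP_sets UNIV Eg" using union_bad by simp
      show "C n \<in> cls_sets UNIV Eg k" if "k \<in> X" for n k
      proof (cases k)
        case CONV
        then show ?thesis using that c \<open>c = CONV\<close> by simp
      next
        case CA
        have "0 \<in> C n" unfolding C_def by simp
        moreover have "\<forall>w\<in>C n. w \<noteq> 0 \<longrightarrow> (0, w) \<in> Eg\<^sup>+" using F5 by blast
        ultimately show ?thesis unfolding CA cls_sets.simps CA_sets_def by blast
      next
        case REF
        then show ?thesis using refC[of "C n" n] unfolding C_def by auto
      next
        case IAP
        then show ?thesis using iapC[of "C n" n] unfolding C_def by auto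
      qed
    qed (use assms in auto)
  next
    case CA
    define C where "C = (\<lambda>n::nat. {w. w mod 3 = 2} \<union> {w. w mod 3 = 1 \<and> w \<le> n})"
    show ?thesis
    proof (rule ng[of C])
      show "mono C" unfolding C_def mono_def by auto
      show "C n \<noteq> {}" for n proof - have "(2::nat) \<in> C n" unfolding C_def by simp then show ?thesis by blast qed
      have "{w. w mod 3 = 2} \<union> {w. w mod 3 = 1} \<subseteq> \<Union>(range C)" unfolding C_def by auto
      then show "\<Union>(range C) \<notin> IAP_sets UNIV Eg" using union_bad by simp
      show "C n \<in> cls_sets UNIV Eg k" if "k \<in> X" for n k
      proof (cases k)
        case CONV
        have "v \<in> C n" if "a \<in> C n" "(a, v) \<in> Eg\<^sup>+" for a v
        proof -
          have "a mod 3 = 2" using that F3 unfolding C_def by auto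
          then have "v mod 3 = 2" using F2 that by blast
          then show ?thesis unfolding C_def by auto
        qed
        then show ?thesis unfolding CONV cls_sets.simps CONV_sets_def by blast
      next
        case CA
        then show ?thesis using that c \<open>c = CA\<close> by simp
      next
        case REF
        then show ?thesis using refC[of "C n" n] unfolding C_def by auto
      next
        case IAP
        then show ?thesis using iapC[of "C n" n] unfolding C_def by auto
      qed
    qed (use assms in auto)
  next
    case IAP
    then show ?thesis using c assms by simp
  qed
  then show ?thesis using bios by blast
qed

end
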